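(* Let $X$ be a complete CAT(0) space, $f:X\to(-\infty,\infty]$ a proper, convex, lower semicontinuous function, $C\subseteq X$ nonempty, and $\psi:[0,\infty)\to[0,\infty)$ an increasing function vanishing only at $0$. Assume $f$ is uniformly convex on $C$ with modulus $\psi$, and let $\gamma>0$ be such that $J_\gamma(C)\subseteq C$. Then $J_\gamma$ is uniformly firmly nonexpansive on $C$ with modulus $2\gamma\psi$.
   Context: A geodesic space $(X,d)$ is CAT(0) if for all $z\in X$, all geodesics $\gamma:[a,b]\to X$ and all $t\in[0,1]$, $d^2(z,\gamma((1-t)a+tb))\le(1-t)d^2(z,\gamma(a))+td^2(z,\gamma(b))-t(1-t)d^2(\gamma(a),\gamma(b))$; $(1-t)x+ty$ denotes the point at distance $t\,d(x,y)$ from $x$ on the unique geodesic from $x$ to $y$. $J_\gamma(x):=\arg\min_{y\in X}\left[f(y)+\frac1{2\gamma}d^2(x,y)\right]$ (exists uniquely). $f$ is uniformly convex on $C$ with modulus $\psi$ if for all $x,y\in C$, $t\in[0,1]$: $f((1-t)x+ty)\le(1-t)f(x)+tf(y)-t(1-t)\psi(d(x,y))$. A map $T$ is uniformly firmly nonexpansive on $C$ with modulus $\varphi$ if $T(C)\subseteq C$ and for all $x,y\in C$, $t\in[0,1]$: $d^2(Tx,Ty)\le d^2((1-t)x+tTx,(1-t)y+tTy)-2(1-t)\varphi(d(Tx,Ty))$. *)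

theory Defs
  imports "HOL-Analysis.Analysis"
begin

definition geodesic :: "(real \<Rightarrow> 'a::metric_space) \<Rightarrow> real \<Rightarrow> real \<Rightarrow> bool" where
  "geodesic g a b \<longleftrightarrow> a \<le> b \<and>
     (\<forall>s\<in>{a..b}. \<forall>t\<in>{a..b}. dist (g s) (g t) = \<bar>s - t\<bar>)"

definition geodesic_space :: "'a::metric_space itself \<Rightarrow> bool" where
  "geodesic_space _ \<longleftrightarrow>
     (\<forall>x y::'a. \<exists>g a b. geodesic g a b \<and> g a = x \<and> g b = y)"

definition CAT0 :: "'a::metric_space itself \<Rightarrow> bool" where
  "CAT0 T \<longleftrightarrow> geodesic_space T \<and>
     (\<forall>(z::'a) g a b t. geodesic g a b \<and> t \<in> {0..1} \<longrightarrow>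
        (dist z (g ((1 - t) * a + t * b)))\<^sup>2
          \<le> (1 - t) * (dist z (g a))\<^sup>2 + t * (dist z (g b))\<^sup>2
             - t * (1 - t) * (dist (g a) (g b))\<^sup>2)"

text \<open>(1-t)x + ty: the point at distance t d(x,y) from x on the (unique) geodesic from x to y.\<close>
definition geo_comb :: "real \<Rightarrow> 'a::metric_space \<Rightarrow> 'a \<Rightarrow> 'a" where
  "geo_comb t x y = (THE z. \<exists>g. geodesic g 0 (dist x y) \<and> g 0 = x \<and> g (dist x y) = y
                              \<and> z = g (t * dist x y))"

text \<open>Functions X \<rightarrow> (-\<infinity>,\<infinity>] are modelled as ereal-valued functions never equal to -\<infinity>.\<close>
definition proper_fun :: "('a \<Rightarrow> ereal) \<Rightarrow> bool" where
  "proper_fun f \<longleftrightarrow> (\<forall>x. f x \<noteq> -\<infinity>) \<and> (\<exists>x. f x \<noteq> \<infinity>)"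

definition convex_fun :: "('a::metric_space \<Rightarrow> ereal) \<Rightarrow> bool" where
  "convex_fun f \<longleftrightarrow> (\<forall>x y t. t \<in> {0..1} \<longrightarrow>
      f (geo_comb t x y) \<le> ereal (1 - t) * f x + ereal t * f y)"

definition lsc_fun :: "('a::topological_space \<Rightarrow> ereal) \<Rightarrow> bool" where
  "lsc_fun f \<longleftrightarrow> (\<forall>c. closed {x. f x \<le> c})"

definition uniformly_convex_on :: "'a::metric_space set \<Rightarrow> (real \<Rightarrow> real) \<Rightarrow> ('a \<Rightarrow> ereal) \<Rightarrow> bool" where
  "uniformly_convex_on C \<psi> f \<longleftrightarrow> (\<forall>x\<in>C. \<forall>y\<in>C. \<forall>t\<in>{0..1}.
      f (geo_comb t x y) \<le> ereal (1 - t) * f x + ereal t * f y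
                           - ereal (t * (1 - t) * \<psi> (dist x y)))"

definition resolvent :: "('a::metric_space \<Rightarrow> ereal) \<Rightarrow> real \<Rightarrow> 'a \<Rightarrow> 'a" where
  "resolvent f \<gamma> x = (THE y. \<forall>z. f y + ereal (1 / (2 * \<gamma>) * (dist x y)\<^sup>2)
                                 \<le> f z + ereal (1 / (2 * \<gamma>) * (dist x z)\<^sup>2))"

definition uniformly_firmly_nonexpansive_on :: "'a::metric_space set \<Rightarrow> (real \<Rightarrow> real) \<Rightarrow> ('a \<Rightarrow> 'a) \<Rightarrow> bool" where
  "uniformly_firmly_nonexpansive_on C \<phi> T \<longleftrightarrow> T ` C \<subseteq> C \<and>
     (\<forall>x\<in>C. \<forall>y\<in>C. \<forall>t\<in>{0..1}.
        (dist (T x) (T y))\<^sup>2 \<le> (dist (geo_comb t x (T x)) (geo_comb t y (T y)))\<^sup>2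
                                - 2 * (1 - t) * \<phi> (dist (T x) (T y)))"

end

theory Submission
  imports Defs
begin


lemma CN:
  assumes "CAT0 TYPE('a::metric_space)" "geodesic g a b" "t \<in> {0..1}"
  shows "(dist (z::'a) (g ((1 - t) * a + t * b)))\<^sup>2 \<le> (1 - t) * (dist z (g a))\<^sup>2 + t * (dist z (g b))\<^sup>2 - t * (1 - t) * (dist (g a) (g b))\<^sup>2"
  using assms unfolding CAT0_def by blast

lemma geo_ex:
  assumes "CAT0 TYPE('a::metric_space)"
  shows "\<exists>g. geodesic g 0 (dist x y) \<and> g 0 = x \<and> g (dist x y) = (y::'a)"
proof -
  from assms obtain g a b where g: "geodesic g a b" "g a = x" "g b = y"
    unfolding CAT0_def geodesic_space_def by blast
  have ab: "a \<le> b" and gd: "\<And>s t. s\<in>{a..b} \<Longrightarrow> t\<in>{a..b} \<Longrightarrow> dist (g s) (g t) = \<bar>s-t\<bar>"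
    using g(1) unfolding geodesic_def by auto
  have D: "dist x y = b - a" using gd[of a b] ab g by auto
  define h where "h s = g (s + a)" for s
  have "geodesic h 0 (dist x y)" unfolding geodesic_def h_def D
  proof (intro conjI ballI)
    fix s t assume "s \<in> {0..b-a}" "t \<in> {0..b-a}"
    then have "dist (g (s + a)) (g (t + a)) = \<bar>(s + a) - (t + a)\<bar>" by (intro gd) auto
    then show "dist (g (s + a)) (g (t + a)) = \<bar>s - t\<bar>" by simp
  qed (use ab in auto)
  moreover have "h 0 = x" "h (dist x y) = y" using g D by (auto simp: h_def)
  ultimately show ?thesis by blast
qed

lemma geo_unique:
  assumes cat: "CAT0 TYPE('a::metric_space)"
    and g1: "geodesic g1 0 D" and g2: "geodesic g2 0 D"
    and e0: "g1 0 = g2 0" and eD: "g1 D = g2 D" and s: "s \<in> {0..D}"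
  shows "g1 s = (g2 s :: 'a)"
proof (cases "D = 0")
  case True then show ?thesis using assms by auto
next
  case False
  have D: "D > 0" using g1 False unfolding geodesic_def by auto
  define t where "t = s / D"
  have t: "t \<in> {0..1}" using s D by (auto simp: t_def)
  have st: "(1 - t) * 0 + t * D = s" and sD: "s = t * D" using D by (auto simp: t_def)
  have h: "(dist (g1 s) (g2 s))\<^sup>2 \<le> (1 - t) * (dist (g1 s) (g2 0))\<^sup>2 + t * (dist (g1 s) (g2 D))\<^sup>2 - t * (1 - t) * (dist (g2 0) (g2 D))\<^sup>2"
    using CN[OF cat g2 t, of "g1 s"] st by simp
  have d1: "dist (g1 s) (g2 0) = s" using g1 s e0 unfolding geodesic_def by (metis atLeastAtMost_iff abs_of_nonneg diff_zero order_refl)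
  have d2: "dist (g1 s) (g2 D) = D - s" using g1 s eD unfolding geodesic_def
    by (metis abs_minus_commute abs_of_nonneg atLeastAtMost_iff diff_ge_0_iff_ge order_refl less_imp_le D)
  have d3: "dist (g2 0) (g2 D) = D" using g2 D unfolding geodesic_def by auto
  have "(1 - t) * s\<^sup>2 + t * (D - s)\<^sup>2 - t * (1 - t) * D\<^sup>2 = 0"
    unfolding sD by (simp add: power2_eq_square algebra_simps)
  then have "(dist (g1 s) (g2 s))\<^sup>2 \<le> 0" using h d1 d2 d3 by simp
  then show ?thesis by simp
qed

lemma geo_comb_eq:
  assumes cat: "CAT0 TYPE('a::metric_space)" and t: "t \<in> {0..1}"
    and g: "geodesic g 0 (dist x y)" "g 0 = x" "g (dist x y) = (y::'a)"
  shows "geo_comb t x y = g (t * dist x y)"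
  unfolding geo_comb_def
proof (rule the_equality)
  show "\<exists>g'. geodesic g' 0 (dist x y) \<and> g' 0 = x \<and> g' (dist x y) = y \<and> g (t * dist x y) = g' (t * dist x y)"
    using g by blast
next
  fix z assume "\<exists>g'. geodesic g' 0 (dist x y) \<and> g' 0 = x \<and> g' (dist x y) = y \<and> z = g' (t * dist x y)"
  then obtain g' where g': "geodesic g' 0 (dist x y)" "g' 0 = x" "g' (dist x y) = y" "z = g' (t * dist x y)"
    by blast
  have "t * dist x y \<in> {0..dist x y}" using t zero_le_dist[of x y] by (auto intro: mult_left_le_one_le)
  then show "z = g (t * dist x y)" using geo_unique[OF cat g'(1) g(1)] g g' by auto
qed

lemma geo_comb_props:
  assumes cat: "CAT0 TYPE('a::metric_space)" and t: "t \<in> {0..1}"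
  shows "dist x (geo_comb t x y) = t * dist x y"
    and "dist (geo_comb t x y) y = (1 - t) * dist x (y::'a)"
    and "(dist z (geo_comb t x y))\<^sup>2 \<le> (1 - t) * (dist z x)\<^sup>2 + t * (dist z y)\<^sup>2 - t * (1 - t) * (dist x y)\<^sup>2"
proof -
  obtain g where g: "geodesic g 0 (dist x y)" "g 0 = x" "g (dist x y) = y" using geo_ex[OF cat] by blast
  have m: "geo_comb t x y = g (t * dist x y)" using geo_comb_eq[OF cat t g] .
  have tD: "t * dist x y \<in> {0..dist x y}" using t zero_le_dist[of x y] by (auto intro: mult_left_le_one_le)
  have gd: "\<And>s r. s\<in>{0..dist x y} \<Longrightarrow> r\<in>{0..dist x y} \<Longrightarrow> dist (g s) (g r) = \<bar>s-r\<bar>"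
    using g(1) unfolding geodesic_def by blast
  have "dist (g 0) (g (t * dist x y)) = \<bar>0 - t * dist x y\<bar>" using gd[OF _ tD] by simp
  then show "dist x (geo_comb t x y) = t * dist x y" using m g t by simp
  have "dist (g (t * dist x y)) (g (dist x y)) = \<bar>t * dist x y - dist x y\<bar>" using gd[OF tD] by simp
  also have "\<dots> = (1 - t) * dist x y" using tD by (simp add: algebra_simps)
  finally show "dist (geo_comb t x y) y = (1 - t) * dist x y" using m g by simp
  have "(1 - t) * 0 + t * dist x y = t * dist x y" by simp
  then show "(dist z (geo_comb t x y))\<^sup>2 \<le> (1 - t) * (dist z x)\<^sup>2 + t * (dist z y)\<^sup>2 - t * (1 - t) * (dist x y)\<^sup>2"
    using CN[OF cat g(1) t, of z] m g by simp
qed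

lemma geo_comb_1:
  assumes cat: "CAT0 TYPE('a::metric_space)"
  shows "geo_comb 1 x y = (y::'a)"
  using geo_comb_props(2)[OF cat, of 1 x y] by simp

lemma quad:
  assumes cat: "CAT0 TYPE('a::metric_space)"
  shows "(dist u q)\<^sup>2 + (dist v p)\<^sup>2 \<le> (dist u p)\<^sup>2 + (dist v q)\<^sup>2 + (dist u v)\<^sup>2 + (dist p (q::'a))\<^sup>2"
proof -
  define m where "m = geo_comb (1/2) u q"
  have h: "(1/2::real) \<in> {0..1}" by simp
  have a: "(dist v m)\<^sup>2 \<le> (1/2) * (dist v u)\<^sup>2 + (1/2) * (dist v q)\<^sup>2 - (1/4) * (dist u q)\<^sup>2"
    using geo_comb_props(3)[OF cat h, of v u q] unfolding m_def by simp
  have b: "(dist p m)\<^sup>2 \<le> (1/2) * (dist p u)\<^sup>2 + (1/2) * (dist p q)\<^sup>2 - (1/4) * (dist u q)\<^sup>2"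
    using geo_comb_props(3)[OF cat h, of p u q] unfolding m_def by simp
  have tr: "dist v p \<le> dist v m + dist p m" using dist_triangle3[of v p m] by (simp add: dist_commute)
  have "(dist v p)\<^sup>2 \<le> (dist v m + dist p m)\<^sup>2" using tr zero_le_dist by (simp add: power_mono)
  also have "\<dots> \<le> 2 * (dist v m)\<^sup>2 + 2 * (dist p m)\<^sup>2"
    using sum_squares_ge_zero[of "dist v m - dist p m" 0] by (simp add: power2_eq_square algebra_simps)
  finally show ?thesis using a b by (simp add: dist_commute)
qed



lemma fin_eq: "f z \<noteq> \<infinity> \<Longrightarrow> f z \<noteq> -\<infinity> \<Longrightarrow> f z = ereal (real_of_ereal (f z))"
  by (cases "f z") auto

lemma conv_real:
  fixes f :: "'a::metric_space \<Rightarrow> ereal"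
  assumes pr: "proper_fun f" and cv: "convex_fun f" and t: "t \<in> {0..1}"
    and a: "f y1 \<noteq> \<infinity>" and b: "f y2 \<noteq> \<infinity>"
  shows "f (geo_comb t y1 y2) \<noteq> \<infinity> \<and>
    real_of_ereal (f (geo_comb t y1 y2)) \<le> (1 - t) * real_of_ereal (f y1) + t * real_of_ereal (f y2)"
proof -
  have n: "\<And>z. f z \<noteq> -\<infinity>" using pr unfolding proper_fun_def by auto
  have "f (geo_comb t y1 y2) \<le> ereal (1 - t) * f y1 + ereal t * f y2" using cv t unfolding convex_fun_def by blast
  also have "\<dots> = ereal ((1 - t) * real_of_ereal (f y1) + t * real_of_ereal (f y2))"
  proof -
    have "f y1 = ereal (real_of_ereal (f y1))" "f y2 = ereal (real_of_ereal (f y2))"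
      using fin_eq[of f y1, OF a n] fin_eq[of f y2, OF b n] by auto
    then show ?thesis by (metis plus_ereal.simps(1) times_ereal.simps(1))
  qed
  finally have le: "f (geo_comb t y1 y2) \<le> ereal ((1 - t) * real_of_ereal (f y1) + t * real_of_ereal (f y2))" .
  then have "f (geo_comb t y1 y2) \<noteq> \<infinity>" by auto
  moreover have "f (geo_comb t y1 y2) = ereal (real_of_ereal (f (geo_comb t y1 y2)))"
    using fin_eq[of f "geo_comb t y1 y2", OF _ n] calculation by blast
  ultimately show ?thesis using le by (metis ereal_less_eq(3))
qed

lemma lower_bound:
  fixes f :: "'a::metric_space \<Rightarrow> ereal"
  assumes cat: "CAT0 TYPE('a)" and pr: "proper_fun f" and cv: "convex_fun f" and lsc: "lsc_fun f"
  shows "\<exists>x0 a0 k. f x0 = ereal a0 \<and> k \<ge> 0 \<and> (\<forall>y. ereal (a0 - 1 - k * dist x0 y) \<le> f y)"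
proof -
  have n: "\<And>z. f z \<noteq> -\<infinity>" using pr unfolding proper_fun_def by auto
  obtain x0 where x0: "f x0 \<noteq> \<infinity>" using pr unfolding proper_fun_def by auto
  define a0 where "a0 = real_of_ereal (f x0)"
  have fa: "f x0 = ereal a0" using fin_eq[of f x0, OF x0 n] a0_def by simp
  have "closed {y. f y \<le> ereal (a0 - 1)}" using lsc unfolding lsc_fun_def by blast
  then have "open (- {y. f y \<le> ereal (a0 - 1)})" by (simp add: open_Compl)
  moreover have "x0 \<in> - {y. f y \<le> ereal (a0 - 1)}" using fa by simp
  ultimately obtain r where r: "r > 0" "\<And>y. dist y x0 < r \<Longrightarrow> y \<in> - {y. f y \<le> ereal (a0 - 1)}"
    unfolding open_dist by blast
  have near: "\<And>y. dist x0 y < r \<Longrightarrow> ereal (a0 - 1) < f y" using r(2) by (force simp: dist_commute)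
  have "ereal (a0 - 1 - (2 / r) * dist x0 y) \<le> f y" for y
  proof (cases "dist x0 y < r")
    case True
    have "ereal (a0 - 1 - (2 / r) * dist x0 y) \<le> ereal (a0 - 1)" using r by simp
    moreover have "ereal (a0 - 1) \<le> f y" using near[OF True] by simp
    ultimately show ?thesis by (rule order_trans)
  next
    case False
    show ?thesis
    proof (cases "f y = \<infinity>")
      case True then show ?thesis by simp
    next
      case fy: False
      define d where "d = dist x0 y"
      have d: "d \<ge> r" using False d_def by simp
      define s where "s = r / (2 * d)"
      have s: "s \<in> {0..1}" "s > 0" using d r by (auto simp: s_def field_simps)
      have dw: "dist x0 (geo_comb s x0 y) = s * d" using geo_comb_props(1)[OF cat s(1)] d_def by simp
      have "s * d = r / 2" using d r by (simp add: s_def field_simps)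
      then have "dist x0 (geo_comb s x0 y) < r" using dw r by simp
      then have "ereal (a0 - 1) < f (geo_comb s x0 y)" by (rule near)
      moreover have "f (geo_comb s x0 y) \<noteq> \<infinity> \<and> real_of_ereal (f (geo_comb s x0 y)) \<le> (1 - s) * a0 + s * real_of_ereal (f y)"
        using conv_real[OF pr cv s(1) x0 fy] fa by simp
      ultimately have "a0 - 1 < (1 - s) * a0 + s * real_of_ereal (f y)"
      proof -
        assume A: "ereal (a0 - 1) < f (geo_comb s x0 y)" and
          B: "f (geo_comb s x0 y) \<noteq> \<infinity> \<and> real_of_ereal (f (geo_comb s x0 y)) \<le> (1 - s) * a0 + s * real_of_ereal (f y)"
        obtain rw where rw: "f (geo_comb s x0 y) = ereal rw"
          using fin_eq[of f "geo_comb s x0 y"] B n by blast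
        then have "a0 - 1 < real_of_ereal (f (geo_comb s x0 y))" using A by simp
        then show ?thesis using B by linarith
      qed
      then have "s * (a0 - 1 / s) < s * real_of_ereal (f y)" using s by (simp add: algebra_simps)
      then have "a0 - 1 / s < real_of_ereal (f y)" using s by simp
      moreover have "1 / s = (2 / r) * d" using d r by (simp add: s_def field_simps)
      ultimately have "a0 - 1 - (2 / r) * dist x0 y \<le> real_of_ereal (f y)" unfolding d_def by simp
      moreover have "f y = ereal (real_of_ereal (f y))" using fin_eq[of f y, OF fy n] .
      ultimately show ?thesis by (metis ereal_less_eq(3))
    qed
  qed
  then show ?thesis using fa r by (intro exI[of _ x0] exI[of _ a0] exI[of _ "2/r"]) auto
qed



lemma mid_ineq:
  fixes f :: "'a::metric_space \<Rightarrow> ereal"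
  assumes cat: "CAT0 TYPE('a)" and pr: "proper_fun f" and cv: "convex_fun f" and c: "c > 0"
    and a: "f y1 \<noteq> \<infinity>" and b: "f y2 \<noteq> \<infinity>"
  shows "f (geo_comb (1/2) y1 y2) \<noteq> \<infinity> \<and>
    real_of_ereal (f (geo_comb (1/2) y1 y2)) + c * (dist x (geo_comb (1/2) y1 y2))\<^sup>2
      \<le> (1/2) * (real_of_ereal (f y1) + c * (dist x y1)\<^sup>2) + (1/2) * (real_of_ereal (f y2) + c * (dist x y2)\<^sup>2)
         - c / 4 * (dist y1 y2)\<^sup>2"
proof -
  have h: "(1/2::real) \<in> {0..1}" by simp
  have A: "f (geo_comb (1/2) y1 y2) \<noteq> \<infinity> \<and> real_of_ereal (f (geo_comb (1/2) y1 y2)) \<le> (1 - 1/2) * real_of_ereal (f y1) + 1/2 * real_of_ereal (f y2)"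
    using conv_real[OF pr cv h a b] .
  have B: "(dist x (geo_comb (1/2) y1 y2))\<^sup>2 \<le> (1 - 1/2) * (dist x y1)\<^sup>2 + 1/2 * (dist x y2)\<^sup>2 - 1/2 * (1 - 1/2) * (dist y1 y2)\<^sup>2"
    using geo_comb_props(3)[OF cat h] .
  have "c * (dist x (geo_comb (1/2) y1 y2))\<^sup>2 \<le> c * ((1 - 1/2) * (dist x y1)\<^sup>2 + 1/2 * (dist x y2)\<^sup>2 - 1/2 * (1 - 1/2) * (dist y1 y2)\<^sup>2)"
    using B c by (simp add: mult_left_mono)
  then show ?thesis using A by (simp add: algebra_simps)
qed

lemma min_unique:
  fixes f :: "'a::metric_space \<Rightarrow> ereal"
  assumes cat: "CAT0 TYPE('a)" and pr: "proper_fun f" and cv: "convex_fun f" and c: "c > 0"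
    and p: "\<forall>z. f p + ereal (c * (dist x p)\<^sup>2) \<le> f z + ereal (c * (dist x z)\<^sup>2)"
    and q: "\<forall>z. f q + ereal (c * (dist x q)\<^sup>2) \<le> f z + ereal (c * (dist x z)\<^sup>2)"
  shows "p = q"
proof -
  have n: "\<And>z. f z \<noteq> -\<infinity>" using pr unfolding proper_fun_def by auto
  obtain x0 where x0: "f x0 \<noteq> \<infinity>" using pr unfolding proper_fun_def by auto
  have fp: "f p \<noteq> \<infinity>" using p[rule_format, of x0] x0 n[of x0] by auto
  have fq: "f q \<noteq> \<infinity>" using q[rule_format, of x0] x0 n[of x0] by auto
  obtain rp where rp: "f p = ereal rp" using fp n[of p] by (cases "f p") auto
  obtain rq where rq: "f q = ereal rq" using fq n[of q] by (cases "f q") auto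
  define m where "m = geo_comb (1/2) p q"
  have M: "f m \<noteq> \<infinity> \<and> real_of_ereal (f m) + c * (dist x m)\<^sup>2
      \<le> (1/2) * (rp + c * (dist x p)\<^sup>2) + (1/2) * (rq + c * (dist x q)\<^sup>2) - c / 4 * (dist p q)\<^sup>2"
    using mid_ineq[OF cat pr cv c fp fq, of x] rp rq unfolding m_def by simp
  obtain rm where rm: "f m = ereal rm" using M n[of m] by (cases "f m") auto
  have 1: "rp + c * (dist x p)\<^sup>2 \<le> rq + c * (dist x q)\<^sup>2" using p[rule_format, of q] rp rq by simp
  have 2: "rq + c * (dist x q)\<^sup>2 \<le> rp + c * (dist x p)\<^sup>2" using q[rule_format, of p] rp rq by simp
  have 3: "rp + c * (dist x p)\<^sup>2 \<le> rm + c * (dist x m)\<^sup>2" using p[rule_format, of m] rp rm by simp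
  have "c / 4 * (dist p q)\<^sup>2 \<le> 0" using 1 2 3 M rm by simp
  then have "(dist p q)\<^sup>2 \<le> 0" using c by (simp add: mult_le_0_iff)
  then show ?thesis by simp
qed

lemma min_exists:
  fixes f :: "'a::complete_space \<Rightarrow> ereal"
  assumes cat: "CAT0 TYPE('a)" and pr: "proper_fun f" and cv: "convex_fun f" and lsc: "lsc_fun f" and c: "c > 0"
  shows "\<exists>p. \<forall>z. f p + ereal (c * (dist x p)\<^sup>2) \<le> f z + ereal (c * (dist x z)\<^sup>2)"
proof -
  have n: "\<And>z. f z \<noteq> -\<infinity>" using pr unfolding proper_fun_def by auto
  obtain x0 a0 k where x0: "f x0 = ereal a0" "k \<ge> 0" "\<And>y. ereal (a0 - 1 - k * dist x0 y) \<le> f y"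
    using lower_bound[OF cat pr cv lsc] by blast
  define dom where "dom = {z. f z \<noteq> \<infinity>}"
  define \<Phi> where "\<Phi> z = real_of_ereal (f z) + c * (dist x z)\<^sup>2" for z
  have feq: "z \<in> dom \<Longrightarrow> f z = ereal (real_of_ereal (f z))" for z
    using fin_eq[of f z] n[of z] unfolding dom_def by blast
  define M where "M = a0 - 1 - k * dist x0 x - k\<^sup>2 / (4 * c)"
  have lowb: "M \<le> \<Phi> z" if z: "z \<in> dom" for z
  proof -
    have "ereal (a0 - 1 - k * dist x0 z) \<le> ereal (real_of_ereal (f z))" using x0(3)[of z] feq[OF z] by simp
    then have f1: "a0 - 1 - k * dist x0 z \<le> real_of_ereal (f z)" by simp
    have "dist x0 z \<le> dist x0 x + dist x z" by (rule dist_triangle)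
    then have f2: "k * dist x0 z \<le> k * dist x0 x + k * dist x z" using x0(2) by (metis distrib_left mult_left_mono)
    have "0 \<le> (2 * c * dist x z - k)\<^sup>2" by simp
    then have "0 \<le> 4 * c * (c * (dist x z)\<^sup>2 - k * dist x z) + k\<^sup>2" by (simp add: power2_eq_square algebra_simps)
    then have "- k\<^sup>2 / (4 * c) \<le> c * (dist x z)\<^sup>2 - k * dist x z" using c by (simp add: field_simps)
    then show ?thesis using f1 f2 unfolding M_def \<Phi>_def by linarith
  qed
  have x0d: "x0 \<in> dom" using x0 unfolding dom_def by simp
  define m where "m = Inf (\<Phi> ` dom)"
  have ne: "\<Phi> ` dom \<noteq> {}" using x0d by blast
  have bdd: "bdd_below (\<Phi> ` dom)" by (rule bdd_belowI2[of dom M \<Phi>]) (rule lowb)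
  have mle: "z \<in> dom \<Longrightarrow> m \<le> \<Phi> z" for z unfolding m_def using bdd by (simp add: cInf_lower)
  have "\<forall>n. \<exists>y. y \<in> dom \<and> \<Phi> y < m + 1 / real (Suc n)"
  proof
    fix n
    have "Inf (\<Phi> ` dom) < m + 1 / real (Suc n)" unfolding m_def by simp
    then obtain v where "v \<in> \<Phi> ` dom" "v < m + 1 / real (Suc n)" using cInf_lessD[OF ne] by blast
    then show "\<exists>y. y \<in> dom \<and> \<Phi> y < m + 1 / real (Suc n)" by blast
  qed
  then obtain y where y: "\<And>n. y n \<in> dom" "\<And>n. \<Phi> (y n) < m + 1 / real (Suc n)" by metis
  have dbound: "c / 4 * (dist (y i) (y j))\<^sup>2 \<le> 1 / real (Suc i) + 1 / real (Suc j)" for i j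
  proof -
    have M: "f (geo_comb (1/2) (y i) (y j)) \<noteq> \<infinity> \<and> \<Phi> (geo_comb (1/2) (y i) (y j))
      \<le> (1/2) * \<Phi> (y i) + (1/2) * \<Phi> (y j) - c / 4 * (dist (y i) (y j))\<^sup>2"
      using mid_ineq[OF cat pr cv c, of "y i" "y j" x] y(1)[of i] y(1)[of j] unfolding dom_def \<Phi>_def by simp
    then have "m \<le> \<Phi> (geo_comb (1/2) (y i) (y j))" using mle unfolding dom_def by simp
    moreover have "0 \<le> 1 / real (Suc i)" "0 \<le> 1 / real (Suc j)" by auto
    ultimately show ?thesis using M y(2)[of i] y(2)[of j] by linarith
  qed
  have "Cauchy y"
  proof (rule metric_CauchyI)
    fix e :: real assume e: "e > 0"
    obtain N where N: "N > 0" "inverse (real N) < c * e\<^sup>2 / 8" using ex_inverse_of_nat_less[of "c * e\<^sup>2 / 8"] c e by auto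
    show "\<exists>M. \<forall>i\<ge>M. \<forall>j\<ge>M. dist (y i) (y j) < e"
    proof (intro exI allI impI)
      fix i j assume ij: "N \<le> i" "N \<le> j"
      have "1 / real (Suc i) \<le> inverse (real N)" using ij N by (simp add: divide_simps)
      moreover have "1 / real (Suc j) \<le> inverse (real N)" using ij N by (simp add: divide_simps)
      ultimately have "c / 4 * (dist (y i) (y j))\<^sup>2 < c / 4 * e\<^sup>2" using dbound[of i j] N by simp
      then have "(dist (y i) (y j))\<^sup>2 < e\<^sup>2" using c by simp
      then show "dist (y i) (y j) < e" using e by (simp add: power_less_imp_less_base)
    qed
  qed
  then obtain p where p: "y \<longlonglongrightarrow> p" using Cauchy_convergent_iff convergent_def by blast
  have key: "f p \<le> ereal (m + e - c * (dist x p)\<^sup>2)" if e: "e > 0" for e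
  proof -
    have cl: "closed {z. f z \<le> ereal (m + e - c * (dist x p)\<^sup>2)}" using lsc unfolding lsc_fun_def by blast
    have lim: "(\<lambda>n. c * (dist x (y n))\<^sup>2) \<longlonglongrightarrow> c * (dist x p)\<^sup>2"
      by (intro tendsto_intros p)
    have ev1: "eventually (\<lambda>n. c * (dist x p)\<^sup>2 - e / 2 < c * (dist x (y n))\<^sup>2) sequentially"
      using order_tendstoD(1)[OF lim, of "c * (dist x p)\<^sup>2 - e / 2"] e by simp
    obtain N where N: "N > 0" "inverse (real N) < e / 2" using ex_inverse_of_nat_less[of "e / 2"] e by auto
    have ev2: "eventually (\<lambda>n. 1 / real (Suc n) < e / 2) sequentially"
    proof (rule eventually_sequentiallyI[of N])
      fix n assume "N \<le> n"
      then have "1 / real (Suc n) \<le> inverse (real N)" using N by (simp add: divide_simps)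
      then show "1 / real (Suc n) < e / 2" using N by simp
    qed
    have "eventually (\<lambda>n. y n \<in> {z. f z \<le> ereal (m + e - c * (dist x p)\<^sup>2)}) sequentially"
      using ev1 ev2
    proof eventually_elim
      case (elim n)
      have "real_of_ereal (f (y n)) < m + e - c * (dist x p)\<^sup>2"
        using elim y(2)[of n] unfolding \<Phi>_def by linarith
      then show ?case using feq[OF y(1)[of n]] by (metis ereal_less_eq(3) less_imp_le mem_Collect_eq)
    qed
    then show ?thesis using Lim_in_closed_set[OF cl _ _ p] by simp
  qed
  have pd: "p \<in> dom" using key[of 1] unfolding dom_def by auto
  have "\<Phi> p \<le> m"
  proof (rule field_le_epsilon)
    fix e :: real assume e: "e > 0"
    have "ereal (real_of_ereal (f p)) \<le> ereal (m + e - c * (dist x p)\<^sup>2)" using key[OF e] feq[OF pd] by simp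
    then show "\<Phi> p \<le> m + e" unfolding \<Phi>_def by simp
  qed
  have "\<forall>z. f p + ereal (c * (dist x p)\<^sup>2) \<le> f z + ereal (c * (dist x z)\<^sup>2)"
  proof
    fix z
    show "f p + ereal (c * (dist x p)\<^sup>2) \<le> f z + ereal (c * (dist x z)\<^sup>2)"
    proof (cases "z \<in> dom")
      case False then show ?thesis unfolding dom_def by simp
    next
      case True
      have "\<Phi> p \<le> \<Phi> z" using \<open>\<Phi> p \<le> m\<close> mle[OF True] by simp
      then have "ereal (real_of_ereal (f p)) + ereal (c * (dist x p)\<^sup>2) \<le> ereal (real_of_ereal (f z)) + ereal (c * (dist x z)\<^sup>2)"
        unfolding \<Phi>_def by simp
      then show ?thesis using feq[OF True] feq[OF pd] by simp
    qed
  qed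
  then show ?thesis by blast
qed



lemma resolvent_min:
  fixes f :: "'a::complete_space \<Rightarrow> ereal"
  assumes cat: "CAT0 TYPE('a)" and pr: "proper_fun f" and cv: "convex_fun f" and lsc: "lsc_fun f" and gam: "\<gamma> > 0"
  shows "\<forall>z. f (resolvent f \<gamma> x) + ereal (1 / (2 * \<gamma>) * (dist x (resolvent f \<gamma> x))\<^sup>2) \<le> f z + ereal (1 / (2 * \<gamma>) * (dist x z)\<^sup>2)"
proof -
  have c: "1 / (2 * \<gamma>) > 0" using gam by simp
  have "\<exists>!y. \<forall>z. f y + ereal (1 / (2 * \<gamma>) * (dist x y)\<^sup>2) \<le> f z + ereal (1 / (2 * \<gamma>) * (dist x z)\<^sup>2)"
    using min_exists[OF cat pr cv lsc c, of x] min_unique[OF cat pr cv c] by blast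
  then show ?thesis unfolding resolvent_def by (rule theI')
qed

lemma eps_le0:
  fixes E B :: real
  assumes "\<And>s. 0 < s \<Longrightarrow> s \<le> 1 \<Longrightarrow> E \<le> s * B"
  shows "E \<le> 0"
proof (rule ccontr)
  assume E: "\<not> E \<le> 0"
  define s where "s = min 1 (E / (2 * (\<bar>B\<bar> + 1)))"
  have s: "0 < s" "s \<le> 1" using E by (auto simp: s_def)
  have "s * B \<le> s * (\<bar>B\<bar> + 1)" using s by (simp add: mult_left_mono)
  also have "\<dots> \<le> E / (2 * (\<bar>B\<bar> + 1)) * (\<bar>B\<bar> + 1)"
    by (rule mult_right_mono) (auto simp: s_def)
  also have "\<dots> = E / 2" by (simp add: field_simps)
  finally show False using assms[OF s] E by simp
qed

lemma side:
  fixes f :: "'a::metric_space \<Rightarrow> ereal"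
  assumes cat: "CAT0 TYPE('a)" and unif: "uniformly_convex_on C \<psi> f"
    and n: "\<And>z. f z \<noteq> -\<infinity>" and pC: "p \<in> C" and qC: "q \<in> C"
    and fp: "f p = ereal a" and fq: "f q = ereal b"
    and minp: "\<forall>z. f p + ereal (1 / (2 * \<gamma>) * (dist x p)\<^sup>2) \<le> f z + ereal (1 / (2 * \<gamma>) * (dist x z)\<^sup>2)"
    and gam: "\<gamma> > 0" and t: "0 \<le> t" "t < 1"
  shows "2 * ((1 - t) * \<gamma>) * (a - b + \<psi> (dist p q))
     \<le> (dist (geo_comb t x p) q)\<^sup>2 - (dist (geo_comb t x p) p)\<^sup>2 - (dist p q)\<^sup>2"
proof -
  define u where "u = geo_comb t x p"
  define A where "A = dist x p"
  define D where "D = dist p q"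
  have t01: "t \<in> {0..1}" using t by simp
  have xu: "dist x u = t * A" unfolding u_def A_def using geo_comb_props(1)[OF cat t01] .
  have up: "dist u p = (1 - t) * A" unfolding u_def A_def using geo_comb_props(2)[OF cat t01] .
  define E where "E = 2 * ((1 - t) * \<gamma>) * (a - b + \<psi> D) - ((dist u q)\<^sup>2 - (dist u p)\<^sup>2 - D\<^sup>2)"
  have "E \<le> s * (2 * ((1 - t) * \<gamma>) * \<psi> D + D\<^sup>2)" if s: "0 < s" "s \<le> 1" for s
  proof -
    have s01: "s \<in> {0..1}" using s by simp
    define w where "w = geo_comb s p q"
    have "f w \<le> ereal (1 - s) * f p + ereal s * f q - ereal (s * (1 - s) * \<psi> (dist p q))"
      using unif pC qC s01 unfolding uniformly_convex_on_def w_def by blast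
    then have fw: "f w \<le> ereal ((1 - s) * a + s * b - s * (1 - s) * \<psi> D)" using fp fq D_def by simp
    then obtain rw where rw: "f w = ereal rw" using n[of w] by (cases "f w") auto
    have c1: "rw \<le> (1 - s) * a + s * b - s * (1 - s) * \<psi> D" using fw rw by simp
    have "f p + ereal (1 / (2 * \<gamma>) * A\<^sup>2) \<le> f w + ereal (1 / (2 * \<gamma>) * (dist x w)\<^sup>2)"
      using minp A_def by blast
    then have "a + 1 / (2 * \<gamma>) * A\<^sup>2 \<le> rw + 1 / (2 * \<gamma>) * (dist x w)\<^sup>2" using fp rw by simp
    then have "2 * \<gamma> * (a + 1 / (2 * \<gamma>) * A\<^sup>2) \<le> 2 * \<gamma> * (rw + 1 / (2 * \<gamma>) * (dist x w)\<^sup>2)"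
      using gam by (intro mult_left_mono) auto
    then have c2: "2 * \<gamma> * (a - rw) \<le> (dist x w)\<^sup>2 - A\<^sup>2" using gam by (simp add: distrib_left right_diff_distrib)
    define e where "e = dist u w"
    have "dist x w \<le> t * A + e" using dist_triangle[of x w u] xu e_def by simp
    then have "(dist x w)\<^sup>2 \<le> (t * A + e)\<^sup>2" by (simp add: power_mono)
    moreover have "(1 - t) * ((t * A + e)\<^sup>2 - A\<^sup>2) \<le> e\<^sup>2 - (1 - t)\<^sup>2 * A\<^sup>2"
    proof -
      have "e\<^sup>2 - (1 - t)\<^sup>2 * A\<^sup>2 - (1 - t) * ((t * A + e)\<^sup>2 - A\<^sup>2) = t * ((1 - t) * A - e)\<^sup>2"
        by (simp add: power2_eq_square algebra_simps)
      moreover have "0 \<le> t * ((1 - t) * A - e)\<^sup>2" using t by simp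
      ultimately show ?thesis by linarith
    qed
    ultimately have c3: "(1 - t) * (2 * \<gamma> * (a - rw)) \<le> e\<^sup>2 - (1 - t)\<^sup>2 * A\<^sup>2"
      using c2 t by (smt (verit) mult_left_mono)
    have c4: "e\<^sup>2 \<le> (1 - s) * (dist u p)\<^sup>2 + s * (dist u q)\<^sup>2 - s * (1 - s) * D\<^sup>2"
      using geo_comb_props(3)[OF cat s01, of u p q] unfolding e_def w_def D_def by simp
    have c5: "(1 - t) * (2 * \<gamma> * (a - ((1 - s) * a + s * b - s * (1 - s) * \<psi> D))) \<le> (1 - t) * (2 * \<gamma> * (a - rw))"
      using c1 t gam by (simp add: mult_left_mono)
    have "(1 - t) * (2 * \<gamma> * (a - ((1 - s) * a + s * b - s * (1 - s) * \<psi> D)))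
        \<le> (1 - s) * (dist u p)\<^sup>2 + s * (dist u q)\<^sup>2 - s * (1 - s) * D\<^sup>2 - (dist u p)\<^sup>2"
    proof -
      have up2: "(dist u p)\<^sup>2 = (1 - t)\<^sup>2 * A\<^sup>2" by (simp add: up power_mult_distrib)
      show ?thesis using c3 c4 c5 up2 by linarith
    qed
    then have "s * (2 * ((1 - t) * \<gamma>) * (a - b + (1 - s) * \<psi> D))
        \<le> s * ((dist u q)\<^sup>2 - (dist u p)\<^sup>2 - (1 - s) * D\<^sup>2)"
      by (simp add: algebra_simps)
    then have "2 * ((1 - t) * \<gamma>) * (a - b + (1 - s) * \<psi> D) \<le> (dist u q)\<^sup>2 - (dist u p)\<^sup>2 - (1 - s) * D\<^sup>2"
      using s by simp
    then show ?thesis unfolding E_def by (simp add: algebra_simps)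
  qed
  then have "E \<le> 0" by (rule eps_le0)
  then show ?thesis unfolding E_def u_def D_def by simp
qed

theorem proposition4p7:
  fixes f :: "'a::complete_space \<Rightarrow> ereal" and C :: "'a set"
    and \<psi> :: "real \<Rightarrow> real" and \<gamma> :: real
  assumes "CAT0 TYPE('a)"
    and "proper_fun f" and "convex_fun f" and "lsc_fun f"
    and "C \<noteq> {}"
    and "\<forall>t\<ge>0. \<psi> t \<ge> 0"
    and "mono_on {0..} \<psi>"
    and "\<forall>t\<ge>0. \<psi> t = 0 \<longleftrightarrow> t = 0"
    and "uniformly_convex_on C \<psi> f"
    and "\<gamma> > 0"
    and "resolvent f \<gamma> ` C \<subseteq> C"
  shows "uniformly_firmly_nonexpansive_on C (\<lambda>s. 2 * \<gamma> * \<psi> s) (resolvent f \<gamma>)"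
proof -
  note cat = assms(1) and pr = assms(2) and cv = assms(3) and lsc = assms(4)
    and unif = assms(9) and gam = assms(10) and JC = assms(11)
  have n: "\<And>z. f z \<noteq> -\<infinity>" using pr unfolding proper_fun_def by auto
  obtain x0 where x0: "f x0 \<noteq> \<infinity>" using pr unfolding proper_fun_def by auto
  have fin: "\<exists>a. f (resolvent f \<gamma> x) = ereal a" for x
  proof -
    have "f (resolvent f \<gamma> x) + ereal (1 / (2 * \<gamma>) * (dist x (resolvent f \<gamma> x))\<^sup>2) \<le> f x0 + ereal (1 / (2 * \<gamma>) * (dist x x0)\<^sup>2)"
      using resolvent_min[OF cat pr cv lsc gam] by blast
    then have "f (resolvent f \<gamma> x) \<noteq> \<infinity>" using x0 n[of x0] by auto
    then show ?thesis using n by (cases "f (resolvent f \<gamma> x)") auto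
  qed
  show ?thesis unfolding uniformly_firmly_nonexpansive_on_def
  proof (intro conjI ballI JC)
    fix x y and t :: real assume xC: "x \<in> C" and yC: "y \<in> C" and t: "t \<in> {0..1}"
    define p where "p = resolvent f \<gamma> x"
    define q where "q = resolvent f \<gamma> y"
    have pC: "p \<in> C" and qC: "q \<in> C" using JC xC yC unfolding p_def q_def by auto
    obtain a where a: "f p = ereal a" using fin p_def by blast
    obtain b where b: "f q = ereal b" using fin q_def by blast
    show "(dist p q)\<^sup>2 \<le> (dist (geo_comb t x p) (geo_comb t y q))\<^sup>2 - 2 * (1 - t) * (2 * \<gamma> * \<psi> (dist p q))"
    proof (cases "t = 1")
      case True then show ?thesis using geo_comb_1[OF cat] by simp
    next
      case False
      then have t': "0 \<le> t" "t < 1" using t by auto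
      have s1: "2 * ((1 - t) * \<gamma>) * (a - b + \<psi> (dist p q))
         \<le> (dist (geo_comb t x p) q)\<^sup>2 - (dist (geo_comb t x p) p)\<^sup>2 - (dist p q)\<^sup>2"
        using side[OF cat unif n pC qC a b _ gam t'] resolvent_min[OF cat pr cv lsc gam, of x] unfolding p_def by blast
      have s2: "2 * ((1 - t) * \<gamma>) * (b - a + \<psi> (dist q p))
         \<le> (dist (geo_comb t y q) p)\<^sup>2 - (dist (geo_comb t y q) q)\<^sup>2 - (dist q p)\<^sup>2"
        using side[OF cat unif n qC pC b a _ gam t'] resolvent_min[OF cat pr cv lsc gam, of y] unfolding q_def by blast
      have qd: "(dist (geo_comb t x p) q)\<^sup>2 + (dist (geo_comb t y q) p)\<^sup>2 \<le> (dist (geo_comb t x p) p)\<^sup>2 + (dist (geo_comb t y q) q)\<^sup>2 + (dist (geo_comb t x p) (geo_comb t y q))\<^sup>2 + (dist p q)\<^sup>2"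
        by (rule quad[OF cat])
      have "2 * ((1 - t) * \<gamma>) * (a - b + \<psi> (dist p q)) + 2 * ((1 - t) * \<gamma>) * (b - a + \<psi> (dist p q))
          = 2 * (1 - t) * (2 * \<gamma> * \<psi> (dist p q))" by (simp add: algebra_simps)
      then show ?thesis using s1 s2 qd by (simp add: dist_commute)
    qed
  qed
qed

end
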